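(* For every string $T\in[1..\sigma]^{n-1}\#$, the number $z_T$ of factors in the LZ77 factorization of $T$ satisfies $z_T\le|\mathcal{E}^r_T|+|\mathcal{F}^r_T|$.
   Context: Let $\sigma\ge1$, $\#=0\notin[1..\sigma]$, and $T\in[1..\sigma]^{n-1}\#$ of length $n\ge2$. LZ77 factorization: let $A$ be a string containing each distinct character of $T$ exactly once, and consider $AT$ (so $T$ is virtually preceded by its alphabet). The factorization $T=T_1T_2\cdots T_z$ is built greedily: if $T_1\cdots T_i$ is a prefix of $T$ of length $k$, then $T_{i+1}$ is the longest prefix of $T[k+1..n]$ that has an occurrence in $AT$ starting at a position corresponding to some $j\le k$ in $T$-coordinates (positions of $A$ allowed; overlap with $T[k+1..]$ allowed); $z_T=z$. For a string $W$, $\mathcal{P}_T(W)$ is the set of starting positions of occurrences of $W$ in the circular version of $T$; $\Sigma^{\ell}_T(W)=\{a: \mathcal{P}_T(aW)\neq\emptyset\}$, $\Sigma^{r}_T(W)=\{b:\mathcal{P}_T(Wb)\ne\emptyset\}$. A repeat is a string $W$ (possibly empty) with $|\mathcal{P}_T(W)|>1$; right-maximal iff $|\Sigma^r_T(W)|>1$, left-maximal iff $|\Sigma^\ell_T(W)|>1$, maximal repeat iff both; $\mathcal{M}_T$ is the set of maximal repeats. $\mathsf{ST}_T$ is the suffix tree of $T$, $\ell(v)$ the label of node $v$. $\mathcal{E}^r_T$ is the set of edges $(v,w)$ of $\mathsf{ST}_T$ with $v=\mathrm{parent}(w)$ and both $\ell(v),\ell(w)\in\mathcal{M}_T$; $\mathcal{F}^r_T$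 is the set of such edges with $\ell(v)\in\mathcal{M}_T$ and $\ell(w)\notin\mathcal{M}_T$. *)

theory Defs
  imports Main "HOL-Library.Sublist"
begin

text \<open>Strings are lists of naturals; the terminator # is 0. Positions are 0-based.\<close>

definition occ :: "nat list \<Rightarrow> nat list \<Rightarrow> nat set" where
  "occ T W = {i. i < length T \<and> (\<forall>k < length W. W ! k = T ! ((i + k) mod length T))}"

definition left_ext :: "nat list \<Rightarrow> nat list \<Rightarrow> nat set" where
  "left_ext T W = {a. occ T (a # W) \<noteq> {}}"

definition right_ext :: "nat list \<Rightarrow> nat list \<Rightarrow> nat set" where
  "right_ext T W = {b. occ T (W @ [b]) \<noteq> {}}"

definition is_repeat :: "nat list \<Rightarrow> nat list \<Rightarrow> bool" where
  "is_repeat T W \<longleftrightarrow> card (occ T W) > 1"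

definition right_maximal :: "nat list \<Rightarrow> nat list \<Rightarrow> bool" where
  "right_maximal T W \<longleftrightarrow> is_repeat T W \<and> card (right_ext T W) > 1"

definition left_maximal :: "nat list \<Rightarrow> nat list \<Rightarrow> bool" where
  "left_maximal T W \<longleftrightarrow> is_repeat T W \<and> card (left_ext T W) > 1"

definition maximal_repeats :: "nat list \<Rightarrow> nat list set" where
  "maximal_repeats T = {W. right_maximal T W \<and> left_maximal T W}"

text \<open>Suffix tree of T, nodes identified with their labels: internal nodes (including the
  root, labelled by the empty string) are the right-maximal repeats, leaves are the suffixes.\<close>
definition st_internal :: "nat list \<Rightarrow> nat list set" where
  "st_internal T = {W. right_maximal T W}"

definition st_nodes :: "nat list \<Rightarrow> nat list set" where
  "st_nodes T = st_internal T \<union> {drop i T | i. i < length T}"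

definition st_edges :: "nat list \<Rightarrow> (nat list \<times> nat list) set" where
  "st_edges T = {(v, w). w \<in> st_nodes T \<and> v \<in> st_internal T \<and> strict_prefix v w \<and>
      (\<forall>u. strict_prefix v u \<and> strict_prefix u w \<longrightarrow> u \<notin> st_internal T)}"

definition E_r :: "nat list \<Rightarrow> (nat list \<times> nat list) set" where
  "E_r T = {(v, w) \<in> st_edges T. v \<in> maximal_repeats T \<and> w \<in> maximal_repeats T}"

definition F_r :: "nat list \<Rightarrow> (nat list \<times> nat list) set" where
  "F_r T = {(v, w) \<in> st_edges T. v \<in> maximal_repeats T \<and> w \<notin> maximal_repeats T}"

text \<open>LZ77 with T virtually preceded by A. Given that the factors so far cover T[0..k), the
  next factor has length lz_len A T k: the longest prefix of T[k..] having an occurrence in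
  A@T starting at a position (in A@T) strictly before position k of T (i.e. T-coordinate
  j <= k in 1-based terms); overlaps allowed.\<close>
definition lz_len :: "nat list \<Rightarrow> nat list \<Rightarrow> nat \<Rightarrow> nat" where
  "lz_len A T k = (GREATEST l. l \<le> length T - k \<and>
     (\<exists>p. p < length A + k \<and> p + l \<le> length (A @ T) \<and>
          take l (drop p (A @ T)) = take l (drop k T)))"

inductive_set lz_starts :: "nat list \<Rightarrow> nat list \<Rightarrow> nat set" for A T where
  start: "0 \<in> lz_starts A T"
| step: "k \<in> lz_starts A T \<Longrightarrow> k + lz_len A T k < length T \<Longrightarrow>
           k + lz_len A T k \<in> lz_starts A T"

definition lz_z :: "nat list \<Rightarrow> nat list \<Rightarrow> nat" where
  "lz_z A T = card (lz_starts A T)"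

end

theory Submission imports Defs "HOL-Number_Theory.Cong" begin

lemma mod_inj_aux:
  fixes i1 i2 k n :: nat
  assumes "i1 < n" "i2 < n" "(i1 + k) mod n = (i2 + k) mod n"
  shows "i1 = i2"
proof -
  have "[i1 + k = i2 + k] (mod n)" using assms(3) by (simp add: cong_def)
  hence "[i1 = i2] (mod n)" by (simp add: cong_add_rcancel_nat)
  thus ?thesis using assms(1,2) by (simp add: cong_def)
qed

locale lzc =
  fixes T A :: "nat list" and n :: nat
  assumes nlen: "length T = n" and n2: "n \<ge> 2"
    and last0: "T ! (n - 1) = 0" and nz: "\<And>i. i < n - 1 \<Longrightarrow> T ! i \<noteq> 0"
    and setA: "set A = set T"
begin

lemma occ_iff: "i \<in> occ T W \<longleftrightarrow> i < n \<and> (\<forall>k < length W. W ! k = T ! ((i + k) mod n))"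
  by (simp add: occ_def nlen)

lemma occ_fin: "finite (occ T W)"
  by (rule finite_subset[of _ "{..<n}"]) (auto simp: occ_iff)

lemma no0:
  assumes "card (occ T W) > 1" shows "0 \<notin> set W"
proof
  assume "0 \<in> set W"
  then obtain k where k: "k < length W" "W ! k = 0" by (auto simp: in_set_conv_nth)
  have pos: "(i + k) mod n = n - 1" if "i \<in> occ T W" for i
  proof -
    have "T ! ((i + k) mod n) = 0" using that k by (auto simp: occ_iff)
    moreover have "(i + k) mod n < n" using n2 by simp
    ultimately show ?thesis using nz[of "(i + k) mod n"] by (cases "(i + k) mod n < n - 1") auto
  qed
  have "occ T W \<subseteq> {i}" if "i \<in> occ T W" for i
  proof
    fix j assume "j \<in> occ T W"
    with that pos have "(i + k) mod n = (j + k) mod n" by simp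
    with \<open>i \<in> occ T W\<close> \<open>j \<in> occ T W\<close> show "j \<in> {i}"
      using mod_inj_aux by (auto simp: occ_iff)
  qed
  hence "card (occ T W) \<le> 1"
  proof (cases "occ T W = {}")
    case False
    then obtain i where "i \<in> occ T W" by auto
    with \<open>\<And>i. i \<in> occ T W \<Longrightarrow> occ T W \<subseteq> {i}\<close> have "occ T W \<subseteq> {i}" by blast
    thus ?thesis using card_mono[of "{i}" "occ T W"] by simp
  qed simp
  with assms show False by simp
qed

lemma linear_occ:
  assumes "0 \<notin> set W" "i \<in> occ T W"
  shows "i + length W \<le> n - 1" "\<And>k. k < length W \<Longrightarrow> W ! k = T ! (i + k)"
proof -
  have i: "i < n" using assms by (simp add: occ_iff)
  show le: "i + length W \<le> n - 1"
  proof (rule ccontr)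
    assume "\<not> ?thesis"
    hence "n - 1 - i < length W" using i by linarith
    hence "W ! (n - 1 - i) = T ! ((i + (n - 1 - i)) mod n)" using assms by (simp add: occ_iff)
    also have "(i + (n - 1 - i)) mod n = n - 1" using i n2 by simp
    finally have "W ! (n - 1 - i) = 0" using last0 by simp
    with \<open>n - 1 - i < length W\<close> assms(1) show False by (metis nth_mem)
  qed
  fix k assume "k < length W"
  thus "W ! k = T ! (i + k)" using assms le by (simp add: occ_iff)
qed

lemma rm2:
  assumes "i \<in> occ T W" "j \<in> occ T W" "i \<noteq> j"
    "T ! ((i + length W) mod n) \<noteq> T ! ((j + length W) mod n)"
  shows "right_maximal T W"
proof -
  have "card {i, j} \<le> card (occ T W)"
    using assms(1-3) occ_fin by (intro card_mono) auto
  hence "card (occ T W) \<ge> 2" using assms(3) by simp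
  moreover
  have oc: "occ T (W @ [T ! ((x + length W) mod n)]) \<noteq> {}" if "x \<in> occ T W" for x
  proof -
    have "x \<in> occ T (W @ [T ! ((x + length W) mod n)])"
      using that by (auto simp: occ_iff nth_append less_Suc_eq)
    thus ?thesis by blast
  qed
  have fin: "finite (right_ext T W)"
  proof (rule finite_subset[of _ "set T"])
    show "right_ext T W \<subseteq> set T"
    proof
      fix b assume "b \<in> right_ext T W"
      then obtain x where "x \<in> occ T (W @ [b])" by (auto simp: right_ext_def)
      hence "b = T ! ((x + length W) mod n)" by (auto simp: occ_iff nth_append)
      thus "b \<in> set T" using n2 nlen by auto
    qed
  qed simp
  have "card {T ! ((i + length W) mod n), T ! ((j + length W) mod n)} \<le> card (right_ext T W)"
    using oc[OF assms(1)] oc[OF assms(2)] fin by (intro card_mono) (auto simp: right_ext_def)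
  hence "card (right_ext T W) \<ge> 2" using assms(4) by simp
  ultimately show ?thesis by (simp add: right_maximal_def is_repeat_def)
qed


lemma rext_fin: "finite (right_ext T W)"
proof (rule finite_subset[of _ "set T"])
  show "right_ext T W \<subseteq> set T"
  proof
    fix b assume "b \<in> right_ext T W"
    then obtain x where "x \<in> occ T (W @ [b])" by (auto simp: right_ext_def)
    hence "b = T ! ((x + length W) mod n)" by (auto simp: occ_iff nth_append)
    thus "b \<in> set T" using n2 nlen by auto
  qed
qed simp

lemma lext_fin: "finite (left_ext T W)"
proof (rule finite_subset[of _ "set T"])
  show "left_ext T W \<subseteq> set T"
  proof
    fix b assume "b \<in> left_ext T W"
    then obtain x where "x \<in> occ T (b # W)" by (auto simp: left_ext_def)
    hence "b = T ! (x mod n)" by (auto simp: occ_iff)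
    thus "b \<in> set T" using n2 nlen by auto
  qed
qed simp

lemma occ_suffix: "i \<in> occ T (X @ Y) \<Longrightarrow> (i + length X) mod n \<in> occ T Y"
proof -
  assume i: "i \<in> occ T (X @ Y)"
  have "Y ! k = T ! (((i + length X) mod n + k) mod n)" if "k < length Y" for k
  proof -
    have A: "\<forall>k'<length X + length Y. (X @ Y) ! k' = T ! ((i + k') mod n)"
      using i by (simp add: occ_iff)
    have "(X @ Y) ! (length X + k) = T ! ((i + (length X + k)) mod n)"
      using A[rule_format, of "length X + k"] that by simp
    thus ?thesis by (simp add: mod_add_left_eq add.assoc)
  qed
  thus ?thesis using n2 by (simp add: occ_iff)
qed

lemma occ_prefix: "i \<in> occ T (X @ Y) \<Longrightarrow> i \<in> occ T X"
proof -
  assume i: "i \<in> occ T (X @ Y)"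
  have "X ! k = T ! ((i + k) mod n)" if "k < length X" for k
  proof -
    have "(X @ Y) ! k = T ! ((i + k) mod n)" using i that by (simp add: occ_iff)
    thus ?thesis using that by (simp add: nth_append)
  qed
  thus ?thesis using i by (simp add: occ_iff)
qed

lemma occ_pred: "p \<in> occ T W \<Longrightarrow> (p + n - 1) mod n \<in> occ T (T ! ((p + n - 1) mod n) # W)"
proof -
  assume p: "p \<in> occ T W"
  have "(p + n - 1) mod n < n" using n2 by simp
  moreover have "(T ! ((p + n - 1) mod n) # W) ! k = T ! (((p + n - 1) mod n + k) mod n)"
    if "k < Suc (length W)" for k
  proof (cases k)
    case 0 thus ?thesis by simp
  next
    case (Suc k')
    have "((p + n - 1) mod n + Suc k') mod n = (p + n - 1 + Suc k') mod n" by (rule mod_add_left_eq)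
    also have "p + n - 1 + Suc k' = (p + k') + n" using n2 by simp
    also have "((p + k') + n) mod n = (p + k') mod n" by simp
    finally show ?thesis using Suc that p by (auto simp: occ_iff)
  qed
  ultimately show ?thesis by (auto simp: occ_iff)
qed

lemma md1: "t \<le> n \<Longrightarrow> ((x + n - t) mod n + (t + y)) mod n = (x + y) mod n"
proof -
  assume "t \<le> n"
  have "((x + n - t) mod n + (t + y)) mod n = (x + n - t + (t + y)) mod n" by (simp add: mod_add_left_eq)
  also have "x + n - t + (t + y) = (x + y) + n" using \<open>t \<le> n\<close> by simp
  finally show ?thesis by simp
qed

definition csub :: "nat \<Rightarrow> nat \<Rightarrow> nat list" where
  "csub s L = map (\<lambda>i. T ! ((s + i) mod n)) [0..<L]"

lemma csub_len[simp]: "length (csub s L) = L" by (simp add: csub_def)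
lemma csub_nth: "k < L \<Longrightarrow> csub s L ! k = T ! ((s + k) mod n)" by (simp add: csub_def)

lemma csub_occ: "s < n \<Longrightarrow> s \<in> occ T (csub s L)"
  by (simp add: occ_iff csub_nth)

lemma occ_csub: "s \<in> occ T W \<Longrightarrow> csub s (length W) = W"
  by (rule nth_equalityI) (auto simp: csub_nth occ_iff)

lemma card_occ_ge:
  assumes "\<forall>j \<in> occ T y. (j + c) mod n \<in> occ T V"
  shows "card (occ T y) \<le> card (occ T V)"
proof (rule card_inj_on_le[of "\<lambda>j. (j + c) mod n"])
  show "inj_on (\<lambda>j. (j + c) mod n) (occ T y)"
    by (rule inj_onI) (auto simp: occ_iff intro: mod_inj_aux)
qed (use assms occ_fin in auto)

lemma closure:
  assumes rm: "right_maximal T y" and s: "s \<in> occ T y"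
  shows "\<exists>t. t < n \<and> csub ((s + n - t) mod n) (t + length y) \<in> maximal_repeats T
     \<and> drop t (csub ((s + n - t) mod n) (t + length y)) = y \<and> (y = [] \<longrightarrow> t = 0)
     \<and> (\<forall>j \<in> occ T y. (j + n - t) mod n \<in> occ T (csub ((s + n - t) mod n) (t + length y)))"
proof -
  define V where "V t = csub ((s + n - t) mod n) (t + length y)" for t
  define good where "good t \<longleftrightarrow> t \<le> n \<and> (\<forall>j\<in>occ T y. (j + n - t) mod n \<in> occ T (V t))" for t
  have sn: "s < n" using s by (simp add: occ_iff)
  have g0: "good 0"
  proof -
    have "V 0 = y" using occ_csub[OF s] sn by (simp add: V_def)
    thus ?thesis by (auto simp: good_def occ_iff)
  qed
  define t where "t = Greatest good"
  have gt: "good t" unfolding t_def by (rule GreatestI_nat[where P=good and b=n, OF g0]) (simp add: good_def)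
  have tmax: "t' \<le> t" if "good t'" for t'
    unfolding t_def by (rule Greatest_le_nat[where P=good and b=n, OF that]) (simp add: good_def)
  have tn: "t \<le> n" using gt by (simp add: good_def)
  have ad: "\<And>x. x + n - t = x + (n - t)" using tn by simp
  have img: "\<forall>j\<in>occ T y. (j + (n - t)) mod n \<in> occ T (V t)"
    using gt tn by (simp add: good_def add.assoc)
  have cy: "card (occ T y) > 1" using rm by (simp add: right_maximal_def is_repeat_def)
  have cV: "card (occ T (V t)) > 1" using card_occ_ge[OF img] cy by simp
  have nz: "0 \<notin> set (V t)" using no0[OF cV] .
  have p0: "(s + n - t) mod n \<in> occ T (V t)" using img s by (simp add: ad)
  have "(s + n - t) mod n + length (V t) \<le> n - 1" using linear_occ(1)[OF nz p0] .
  hence tlt: "t < n" using n2 by (simp add: V_def)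
  have dropV: "drop t (V t) = y"
  proof (rule nth_equalityI)
    show "length (drop t (V t)) = length y" by (simp add: V_def)
  next
    fix k assume "k < length (drop t (V t))"
    hence k: "k < length y" by (simp add: V_def)
    have "drop t (V t) ! k = T ! (((s + n - t) mod n + (t + k)) mod n)"
      using k by (simp add: V_def csub_nth)
    also have "\<dots> = T ! ((s + k) mod n)" using md1[OF tn] by simp
    also have "\<dots> = y ! k" using s k by (simp add: occ_iff)
    finally show "drop t (V t) ! k = y ! k" .
  qed
  have rV: "right_maximal T (V t)"
  proof -
    have sub: "right_ext T y \<subseteq> right_ext T (V t)"
    proof
      fix b assume "b \<in> right_ext T y"
      then obtain j where j: "j \<in> occ T (y @ [b])" by (auto simp: right_ext_def)
      have jy: "j \<in> occ T y" using occ_prefix[OF j] .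
      have b: "b = T ! ((j + length y) mod n)" using j by (auto simp: occ_iff nth_append)
      define p where "p = (j + n - t) mod n"
      have p: "p \<in> occ T (V t)" using img jy by (simp add: p_def ad)
      have "(p + length (V t)) mod n = (j + length y) mod n"
        using md1[OF tn] by (simp add: p_def V_def)
      hence "p \<in> occ T (V t @ [b])" using p b by (auto simp: occ_iff nth_append less_Suc_eq)
      thus "b \<in> right_ext T (V t)" by (auto simp: right_ext_def)
    qed
    have "card (right_ext T y) \<le> card (right_ext T (V t))" using card_mono[OF rext_fin sub] .
    thus ?thesis using rm cV by (simp add: right_maximal_def is_repeat_def)
  qed
  have lV: "left_maximal T (V t)"
  proof (rule ccontr)
    assume "\<not> left_maximal T (V t)"
    hence c1: "card (left_ext T (V t)) \<le> 1" using cV by (simp add: left_maximal_def is_repeat_def)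
    define a where "a = T ! (((s + n - t) mod n + n - 1) mod n)"
    have aV: "a \<in> left_ext T (V t)" using occ_pred[OF p0] by (auto simp: left_ext_def a_def)
    have single: "x = a" if "x \<in> left_ext T (V t)" for x
    proof (rule ccontr)
      assume "x \<noteq> a"
      hence "card {x, a} \<le> card (left_ext T (V t))" using that aV lext_fin by (intro card_mono) auto
      with \<open>x \<noteq> a\<close> c1 show False by simp
    qed
    have Vs: "V (Suc t) = a # V t"
    proof (rule nth_equalityI)
      show "length (V (Suc t)) = length (a # V t)" by (simp add: V_def)
    next
      fix k assume "k < length (V (Suc t))"
      hence k: "k < Suc t + length y" by (simp add: V_def)
      show "V (Suc t) ! k = (a # V t) ! k"
      proof (cases k)
        case 0
        have "((s + n - t) mod n + n - 1) mod n = ((s + n - t) mod n + (n - 1)) mod n"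
          using n2 by simp
        also have "\<dots> = (s + n - t + (n - 1)) mod n" by (simp add: mod_add_left_eq)
        also have "s + n - t + (n - 1) = (s + n - Suc t) + n" using tlt by simp
        finally have "((s + n - t) mod n + n - 1) mod n = (s + n - Suc t) mod n" by simp
        thus ?thesis using 0 by (simp add: V_def csub_nth a_def)
      next
        case (Suc k')
        have "(s + n - Suc t + Suc k') mod n = ((s + n - t) mod n + k') mod n"
        proof -
          have e: "s + n - Suc t + Suc k' = s + n - t + k'" using tlt by simp
          show ?thesis unfolding e by (rule mod_add_left_eq[symmetric])
        qed
        moreover have "((s + n - Suc t) mod n + Suc k') mod n = (s + n - Suc t + Suc k') mod n"
          by (rule mod_add_left_eq)
        ultimately show ?thesis using Suc k by (simp add: V_def csub_nth)
      qed
    qed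
    have "good (Suc t)"
    proof -
      have "(j + n - Suc t) mod n \<in> occ T (V (Suc t))" if j: "j \<in> occ T y" for j
      proof -
        define p where "p = (j + n - t) mod n"
        have p: "p \<in> occ T (V t)" using img j by (simp add: p_def ad)
        have pp: "(p + n - 1) mod n \<in> occ T (T ! ((p + n - 1) mod n) # V t)" using occ_pred[OF p] .
        hence "T ! ((p + n - 1) mod n) = a" using single by (auto simp: left_ext_def)
        with pp have "(p + n - 1) mod n \<in> occ T (V (Suc t))" using Vs by simp
        moreover have "(p + n - 1) mod n = (j + n - Suc t) mod n"
        proof -
          have "(p + n - 1) mod n = (p + (n - 1)) mod n" using n2 by simp
          also have "\<dots> = (j + n - t + (n - 1)) mod n" by (simp add: p_def mod_add_left_eq)
          also have "j + n - t + (n - 1) = (j + n - Suc t) + n" using tlt by simp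
          finally show ?thesis by simp
        qed
        ultimately show ?thesis by simp
      qed
      thus ?thesis using tlt by (simp add: good_def)
    qed
    with tmax show False by fastforce
  qed
  have ye: "y = [] \<longrightarrow> t = 0"
  proof
    assume y: "y = []"
    show "t = 0"
    proof (rule ccontr)
      assume "t \<noteq> 0"
      define j where "j = (n - 1 + t) mod n"
      have "j \<in> occ T y" using y n2 by (simp add: occ_iff j_def)
      hence "(j + (n - t)) mod n \<in> occ T (V t)" using img by blast
      moreover have "(j + (n - t)) mod n = n - 1"
      proof -
        have "(j + (n - t)) mod n = (n - 1 + t + (n - t)) mod n" by (simp add: j_def mod_add_left_eq)
        also have "n - 1 + t + (n - t) = (n - 1) + n" using tn n2 by simp
        also have "((n - 1) + n) mod n = (n - 1) mod n" by (rule mod_add_self2)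
        also have "\<dots> = n - 1" using n2 by simp
        finally show ?thesis .
      qed
      ultimately have "V t ! 0 = T ! (n - 1)" using \<open>t \<noteq> 0\<close> by (auto simp: occ_iff V_def)
      hence "0 \<in> set (V t)" using \<open>t \<noteq> 0\<close> last0 by (metis V_def csub_len add_gr_0 gr0I nth_mem)
      with nz show False by simp
    qed
  qed
  show ?thesis
    apply (rule exI[of _ t])
    using tlt rV lV dropV ye img tn
    by (auto simp: maximal_repeats_def V_def good_def add.assoc)
qed


lemma child:
  assumes V: "V \<in> maximal_repeats T" and s: "s \<in> occ T (V @ [b])"
  shows "\<exists>w. (V, w) \<in> st_edges T \<and> prefix (V @ [b]) w"
proof -
  have rV: "right_maximal T V" using V by (simp add: maximal_repeats_def)
  have nz: "0 \<notin> set V" using rV no0 by (simp add: right_maximal_def is_repeat_def)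
  have sV: "s \<in> occ T V" using occ_prefix[OF s] .
  have sl: "s + length V \<le> n - 1" using linear_occ(1)[OF nz sV] .
  have Vk: "\<And>k. k < length V \<Longrightarrow> V ! k = T ! (s + k)" using linear_occ(2)[OF nz sV] .
  have b: "b = T ! (s + length V)"
  proof -
    have A: "\<forall>k<Suc (length V). (V @ [b]) ! k = T ! ((s + k) mod n)" using s by (simp add: occ_iff)
    have "(V @ [b]) ! length V = T ! ((s + length V) mod n)" using A[rule_format, of "length V"] by simp
    thus ?thesis using sl n2 by simp
  qed
  have pre: "prefix (V @ [b]) (drop s T)"
  proof -
    have "take (Suc (length V)) (drop s T) = V @ [b]"
      by (rule nth_equalityI) (use sl nlen n2 Vk b in \<open>auto simp: nth_append less_Suc_eq\<close>)
    thus ?thesis by (metis prefix_def append_take_drop_id)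
  qed
  define N where "N = {w \<in> st_nodes T. prefix (V @ [b]) w}"
  have dN: "drop s T \<in> N" using pre sl n2 nlen by (auto simp: N_def st_nodes_def)
  define m where "m = (LEAST m. \<exists>w\<in>N. length w = m)"
  obtain w where w: "w \<in> N" "length w = m"
    using LeastI_ex[of "\<lambda>m. \<exists>w\<in>N. length w = m"] dN unfolding m_def by blast
  have wmin: "length w \<le> length w'" if "w' \<in> N" for w'
    using Least_le[of "\<lambda>m. \<exists>w\<in>N. length w = m" "length w'"] that w(2) unfolding m_def by auto
  have pw: "prefix (V @ [b]) w" using w by (simp add: N_def)
  have e1: "w \<in> st_nodes T" using w by (simp add: N_def)
  have e2: "V \<in> st_internal T" using rV by (simp add: st_internal_def)
  have e3: "strict_prefix V w" using pw
    by (metis append_prefixD prefix_order.dual_order.strict_iff_not prefix_length_le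
           length_append_singleton not_less_eq_eq)
  have e4: "u \<notin> st_internal T" if u: "strict_prefix V u" "strict_prefix u w" for u
  proof
    assume ui: "u \<in> st_internal T"
    have lu: "length V < length u" using u(1) prefix_length_less by blast
    have uw: "prefix u w" using u(2) by (simp add: strict_prefix_def)
    have "prefix (V @ [b]) u"
      by (rule prefix_length_prefix[OF pw uw]) (use lu in simp)
    moreover have "u \<in> st_nodes T" using ui by (simp add: st_nodes_def)
    ultimately have "u \<in> N" by (simp add: N_def)
    hence "length w \<le> length u" by (rule wmin)
    moreover have "length u < length w" using u(2) prefix_length_less by blast
    ultimately show False by simp
  qed
  have "(V, w) \<in> st_edges T" using e1 e2 e3 e4 by (simp add: st_edges_def)
  with pw show ?thesis by blast
qed

lemma nodes_fin: "finite (st_nodes T)"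
proof (rule finite_subset[of _ "{xs. set xs \<subseteq> set T \<and> length xs \<le> n}"])
  show "st_nodes T \<subseteq> {xs. set xs \<subseteq> set T \<and> length xs \<le> n}"
  proof
    fix W assume "W \<in> st_nodes T"
    then consider "right_maximal T W" | i where "W = drop i T"
      by (auto simp: st_nodes_def st_internal_def)
    thus "W \<in> {xs. set xs \<subseteq> set T \<and> length xs \<le> n}"
    proof cases
      case 1
      hence c: "card (occ T W) > 1" by (simp add: right_maximal_def is_repeat_def)
      then obtain i where i: "i \<in> occ T W" by (metis card.empty equals0I not_less0)
      have "length W \<le> n" using linear_occ(1)[OF no0[OF c] i] by simp
      moreover have "set W \<subseteq> set T"
      proof
        fix x assume "x \<in> set W"
        then obtain k where "k < length W" "x = W ! k" by (auto simp: in_set_conv_nth)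
        hence "x = T ! ((i + k) mod n)" using i by (simp add: occ_iff)
        thus "x \<in> set T" using n2 nlen by simp
      qed
      ultimately show ?thesis by simp
    next
      case 2 thus ?thesis using nlen by (auto dest: in_set_dropD)
    qed
  qed
qed (simp add: finite_lists_length_le)

lemma edges_fin: "finite (st_edges T)"
proof (rule finite_subset[of _ "st_nodes T \<times> st_nodes T"])
  show "st_edges T \<subseteq> st_nodes T \<times> st_nodes T"
    by (auto simp: st_edges_def st_nodes_def)
qed (simp add: nodes_fin)

lemma EF: "card (E_r T) + card (F_r T) = card {(v, w) \<in> st_edges T. v \<in> maximal_repeats T}"
proof -
  have "{(v, w) \<in> st_edges T. v \<in> maximal_repeats T} = E_r T \<union> F_r T"
    by (auto simp: E_r_def F_r_def)
  moreover have "finite (E_r T)" "finite (F_r T)"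
    by (rule finite_subset[OF _ edges_fin], auto simp: E_r_def F_r_def)+
  moreover have "E_r T \<inter> F_r T = {}" by (auto simp: E_r_def F_r_def)
  ultimately show ?thesis by (simp add: card_Un_disjoint)
qed


abbreviation len where "len k \<equiv> lz_len A T k"

lemma len_bound:
  assumes "l \<le> length T - k \<and> (\<exists>p. p < length A + k \<and> p + l \<le> length (A @ T) \<and>
          take l (drop p (A @ T)) = take l (drop k T))"
  shows "l \<le> n - k"
  using assms nlen by simp

definition Qk where "Qk k l \<longleftrightarrow> l \<le> length T - k \<and> (\<exists>p. p < length A + k \<and> p + l \<le> length (A @ T) \<and>
          take l (drop p (A @ T)) = take l (drop k T))"

lemma len_eq: "len k = Greatest (Qk k)"
  by (simp add: lz_len_def Qk_def[abs_def])

lemma Qk_bound: "Qk k l \<Longrightarrow> l \<le> n - k"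
  using nlen by (simp add: Qk_def)

lemma len_ge:
  assumes "k + m \<le> n" "q < k" "q + m \<le> n" "take m (drop q T) = take m (drop k T)"
  shows "m \<le> len k"
  unfolding len_eq
proof (rule Greatest_le_nat[where P = "Qk k" and b = "n - k"])
  show "Qk k m"
    unfolding Qk_def using assms nlen by (intro conjI exI[of _ "length A + q"]) auto
qed (rule Qk_bound)

lemma len_props:
  assumes "k < n" shows "1 \<le> len k" "len k \<le> n - k"
proof -
  have "T ! k \<in> set A" using setA assms nlen by simp
  then obtain p where p: "p < length A" "A ! p = T ! k" by (auto simp: in_set_conv_nth)
  have P1: "Qk k 1" unfolding Qk_def
  proof (intro conjI exI[of _ p])
    show "take 1 (drop p (A @ T)) = take 1 (drop k T)"
      using p assms nlen by (simp add: take_Suc_conv_app_nth hd_drop_conv_nth nth_append)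
  qed (use p assms nlen in auto)
  show "1 \<le> len k" unfolding len_eq
    by (rule Greatest_le_nat[where P = "Qk k" and b = "n - k", OF P1]) (rule Qk_bound)
  show "len k \<le> n - k" unfolding len_eq
    by (rule Qk_bound, rule GreatestI_nat[where P = "Qk k" and b = "n - k", OF P1]) (rule Qk_bound)
qed

lemma lz_lt: "k \<in> lz_starts A T \<Longrightarrow> k < n"
  by (induction rule: lz_starts.induct) (use n2 nlen in auto)

lemma lz_order:
  "k1 \<in> lz_starts A T \<Longrightarrow> k0 \<in> lz_starts A T \<Longrightarrow> k0 < k1 \<Longrightarrow> k0 + len k0 \<le> k1"
proof (induction k1 arbitrary: k0 rule: less_induct)
  case (less k1)
  from less.prems(1) show ?case
  proof cases
    case start thus ?thesis using less.prems by simp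
  next
    case (step k)
    have kin: "k \<in> lz_starts A T" and k1e: "k1 = k + len k" using step by auto
    have kl: "1 \<le> len k" using len_props(1)[OF lz_lt[OF kin]] .
    hence kk: "k < k1" using step by simp
    consider "k0 = k" | "k0 < k" | "k < k0" by linarith
    thus ?thesis
    proof cases
      case 1 thus ?thesis using step by simp
    next
      case 2 thus ?thesis using less.IH[OF kk kin less.prems(2)] k1e by simp
    next
      case 3
      have "k + len k \<le> k0" using less.IH[OF less.prems(3) less.prems(2) kin 3] .
      thus ?thesis using k1e less.prems by simp
    qed
  qed
qed

lemma rm_nil: "right_maximal T []"
proof (rule rm2[of 0 _ "n - 1"])
  show "0 \<in> occ T []" "n - 1 \<in> occ T []" using n2 by (auto simp: occ_iff)
  show "0 \<noteq> n - 1" using n2 by simp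
  show "T ! ((0 + length []) mod n) \<noteq> T ! ((n - 1 + length []) mod n)"
    using n2 nz[of 0] last0 by simp
qed

definition mm where "mm k = (GREATEST m. m \<le> len k \<and> right_maximal T (take m (drop k T)))"
definition yy where "yy k = take (mm k) (drop k T)"
definition bb where "bb k = T ! (k + mm k)"
definition tt where "tt k = (SOME t. t < n \<and> csub ((k + n - t) mod n) (t + length (yy k)) \<in> maximal_repeats T
     \<and> drop t (csub ((k + n - t) mod n) (t + length (yy k))) = yy k \<and> (yy k = [] \<longrightarrow> t = 0)
     \<and> (\<forall>j \<in> occ T (yy k). (j + n - t) mod n \<in> occ T (csub ((k + n - t) mod n) (t + length (yy k)))))"
definition VV where "VV k = csub ((k + n - tt k) mod n) (tt k + mm k)"

lemma fac:
  assumes k: "k < n"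
  shows "mm k \<le> len k" "right_maximal T (yy k)" "length (yy k) = mm k" "k + mm k < n"
    "k \<in> occ T (yy k)"
    "\<And>i. i < mm k \<Longrightarrow> yy k ! i = T ! (k + i)"
    "\<And>M. M \<le> len k \<Longrightarrow> right_maximal T (take M (drop k T)) \<Longrightarrow> M \<le> mm k"
proof -
  have P0: "0 \<le> len k \<and> right_maximal T (take 0 (drop k T))" using rm_nil by simp
  have G: "mm k \<le> len k \<and> right_maximal T (take (mm k) (drop k T))"
    unfolding mm_def by (rule GreatestI_nat[where P = "\<lambda>m. m \<le> len k \<and> right_maximal T (take m (drop k T))" and b = "len k", OF P0]) auto
  show M: "\<And>M. M \<le> len k \<Longrightarrow> right_maximal T (take M (drop k T)) \<Longrightarrow> M \<le> mm k"
    unfolding mm_def by (rule Greatest_le_nat[where P = "\<lambda>m. m \<le> len k \<and> right_maximal T (take m (drop k T))" and b = "len k"]) auto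
  show m: "mm k \<le> len k" using G by simp
  show rm: "right_maximal T (yy k)" using G by (simp add: yy_def)
  have ml: "mm k \<le> n - k" using m len_props(2)[OF k] by simp
  show ly: "length (yy k) = mm k" using ml nlen by (simp add: yy_def)
  show yi: "\<And>i. i < mm k \<Longrightarrow> yy k ! i = T ! (k + i)" using ml nlen by (simp add: yy_def)
  have z: "0 \<notin> set (yy k)" using rm no0 by (simp add: right_maximal_def is_repeat_def)
  show "k + mm k < n"
  proof (rule ccontr)
    assume "\<not> k + mm k < n"
    hence e: "k + mm k = n" using ml k by simp
    hence "n - 1 - k < mm k" using k by simp
    hence "yy k ! (n - 1 - k) = 0" using yi[of "n - 1 - k"] e last0 k by simp
    with \<open>n - 1 - k < mm k\<close> ly z show False by (metis nth_mem)
  qed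
  thus "k \<in> occ T (yy k)" using yi ly k by (simp add: occ_iff)
qed

lemma fac_cl:
  assumes k: "k < n"
  shows "tt k < n" "VV k \<in> maximal_repeats T" "drop (tt k) (VV k) = yy k" "yy k = [] \<longrightarrow> tt k = 0"
    "(k + n - tt k) mod n \<in> occ T (VV k @ [bb k])" "length (VV k) = tt k + mm k"
proof -
  note c = someI_ex[OF closure[OF fac(2)[OF k] fac(5)[OF k]], folded tt_def]
  show t: "tt k < n" "VV k \<in> maximal_repeats T" "drop (tt k) (VV k) = yy k" "yy k = [] \<longrightarrow> tt k = 0"
    using c fac(3)[OF k] by (auto simp: VV_def)
  show l: "length (VV k) = tt k + mm k" by (simp add: VV_def)
  have oc: "(k + n - tt k) mod n \<in> occ T (VV k)"
    using c fac(5)[OF k] fac(3)[OF k] by (auto simp: VV_def)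
  have "((k + n - tt k) mod n + length (VV k)) mod n = (k + mm k) mod n"
    using md1[of "tt k" k "mm k"] t(1) l by simp
  also have "\<dots> = k + mm k" using fac(4)[OF k] by simp
  finally have "T ! (((k + n - tt k) mod n + length (VV k)) mod n) = bb k" by (simp add: bb_def)
  thus "(k + n - tt k) mod n \<in> occ T (VV k @ [bb k])" using oc
    by (auto simp: occ_iff nth_append less_Suc_eq)
qed


lemma core:
  assumes k0: "k0 \<in> lz_starts A T" and k1: "k1 \<in> lz_starts A T" and lt: "k0 < k1"
    and VV: "VV k0 = VV k1" and bb: "bb k0 = bb k1"
  shows False
proof -
  have k0n: "k0 < n" and k1n: "k1 < n" using lz_lt k0 k1 by auto
  define V where "V = VV k0"
  define b where "b = bb k0"
  define t0 where "t0 = tt k0"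
  define t1 where "t1 = tt k1"
  define m0 where "m0 = mm k0"
  define m1 where "m1 = mm k1"
  define s0 where "s0 = (k0 + n - t0) mod n"
  have s0: "s0 \<in> occ T (V @ [b])" using fac_cl(5)[OF k0n] by (simp add: s0_def V_def b_def t0_def)
  have lV0: "length V = t0 + m0" using fac_cl(6)[OF k0n] by (simp add: V_def t0_def m0_def)
  have lV1: "length V = t1 + m1" using fac_cl(6)[OF k1n] VV by (simp add: V_def t1_def m1_def)
  have d1: "drop t1 V = yy k1" using fac_cl(3)[OF k1n] VV by (simp add: V_def t1_def)
  have t0n: "t0 < n" using fac_cl(1)[OF k0n] by (simp add: t0_def)
  have e0n: "k0 + m0 < n" using fac(4)[OF k0n] by (simp add: m0_def)
  have e1n: "k1 + m1 < n" using fac(4)[OF k1n] by (simp add: m1_def)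
  have Vsplit: "V @ [b] = take t1 V @ (yy k1 @ [b])" using d1 by (metis append_assoc append_take_drop_id)
  have lt1: "length (take t1 V) = t1" using lV1 by simp
  define s where "s = (s0 + t1) mod n"
  have s: "s \<in> occ T (yy k1 @ [b])" using occ_suffix[of s0 "take t1 V" "yy k1 @ [b]"] s0 Vsplit lt1
    by (simp add: s_def)
  have sy: "s \<in> occ T (yy k1)" using occ_prefix[OF s] .
  have z1: "0 \<notin> set (yy k1)" using fac(2)[OF k1n] no0 by (simp add: right_maximal_def is_repeat_def)
  have ly1: "length (yy k1) = m1" using fac(3)[OF k1n] by (simp add: m1_def)
  have sl: "s + m1 \<le> n - 1" using linear_occ(1)[OF z1 sy] ly1 by simp
  have sT: "\<And>i. i < m1 \<Longrightarrow> T ! (s + i) = T ! (k1 + i)"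
    using linear_occ(2)[OF z1 sy] fac(6)[OF k1n] ly1 by (simp add: m1_def)
  have bs: "b = T ! ((s + m1) mod n)"
  proof -
    have A: "\<forall>k<Suc m1. (yy k1 @ [b]) ! k = T ! ((s + k) mod n)" using s ly1 by (simp add: occ_iff)
    show ?thesis using A[rule_format, of m1] ly1 by (simp add: nth_append)
  qed
  have bs': "b = T ! (s + m1)" using bs sl n2 by simp
  have b1: "b = T ! (k1 + m1)" using bb by (simp add: b_def bb_def m1_def)
  have se: "s + m1 = k0 + m0"
  proof -
    have "(s + m1) mod n = (s0 + t1 + m1) mod n" by (simp add: s_def mod_add_left_eq)
    also have "\<dots> = (s0 + (t0 + m0)) mod n" using lV0 lV1 by (simp add: add.assoc)
    also have "\<dots> = (k0 + m0) mod n" unfolding s0_def using md1[of t0 k0 m0] t0n by simp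
    finally show ?thesis using sl e0n n2 by simp
  qed
  have ord: "k0 + len k0 \<le> k1" using lz_order[OF k1 k0 lt] .
  have m0l: "m0 \<le> len k0" using fac(1)[OF k0n] by (simp add: m0_def)
  show False
  proof (cases "s < k1")
    case True
    define Pm where "Pm M \<longleftrightarrow> k1 + M \<le> n \<and> (\<forall>i<M. T ! (s + i) = T ! (k1 + i))" for M
    have Pm1: "Pm (Suc m1)" unfolding Pm_def
    proof (intro conjI allI impI)
      show "k1 + Suc m1 \<le> n" using e1n by simp
      fix i assume "i < Suc m1"
      thus "T ! (s + i) = T ! (k1 + i)" using sT bs' b1 by (cases "i = m1") auto
    qed
    define M where "M = Greatest Pm"
    have PM: "Pm M" unfolding M_def
      by (rule GreatestI_nat[where P = Pm and b = n, OF Pm1]) (simp add: Pm_def)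
    have Mmax: "M' \<le> M" if "Pm M'" for M'
      unfolding M_def by (rule Greatest_le_nat[where P = Pm and b = n, OF that]) (simp add: Pm_def)
    have M1: "Suc m1 \<le> M" using Mmax[OF Pm1] .
    have Mn: "k1 + M < n"
    proof (rule ccontr)
      assume "\<not> k1 + M < n"
      hence e: "k1 + M = n" using PM by (simp add: Pm_def)
      have "n - 1 - k1 < M" using e k1n by simp
      hence "T ! (s + (n - 1 - k1)) = T ! (k1 + (n - 1 - k1))" using PM unfolding Pm_def by blast
      also have "k1 + (n - 1 - k1) = n - 1" using k1n by simp
      finally have "T ! (s + (n - 1 - k1)) = 0" using last0 by simp
      moreover have "s + (n - 1 - k1) < n - 1" using True k1n by simp
      ultimately show False using nz by blast
    qed
    have Mdiff: "T ! (s + M) \<noteq> T ! (k1 + M)"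
    proof
      assume eq: "T ! (s + M) = T ! (k1 + M)"
      have "Pm (Suc M)" using PM Mn eq by (auto simp: Pm_def less_Suc_eq)
      with Mmax show False by fastforce
    qed
    define u where "u = take M (drop k1 T)"
    have lu: "length u = M" using Mn nlen by (simp add: u_def)
    have ui: "\<And>i. i < M \<Longrightarrow> u ! i = T ! (k1 + i)" using Mn nlen by (simp add: u_def)
    have "take M (drop s T) = take M (drop k1 T)"
      by (rule nth_equalityI) (use Mn True nlen PM in \<open>auto simp: Pm_def\<close>)
    hence Mle: "M \<le> len k1" using len_ge[of k1 M s] Mn True by simp
    have "right_maximal T u"
    proof (rule rm2[of s _ k1])
      show "s \<in> occ T u" using ui lu PM Mn True by (auto simp: occ_iff Pm_def)
      show "k1 \<in> occ T u" using ui lu k1n Mn by (auto simp: occ_iff)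
      show "s \<noteq> k1" using True by simp
      show "T ! ((s + length u) mod n) \<noteq> T ! ((k1 + length u) mod n)" using Mdiff Mn True lu by simp
    qed
    hence "M \<le> m1" using fac(7)[OF k1n Mle] by (simp add: u_def m1_def)
    with M1 show False by simp
  next
    case False
    have "k0 + m0 \<le> k1" using ord m0l by simp
    hence "m1 = 0" using se False by simp
    hence "yy k1 = []" using ly1 by simp
    hence "t1 = 0" using fac_cl(4)[OF k1n] by (simp add: t1_def)
    hence "m0 = 0" using lV0 lV1 \<open>m1 = 0\<close> by simp
    thus False using se \<open>m1 = 0\<close> False lt by simp
  qed
qed

lemma main: "card (lz_starts A T) \<le> card (E_r T) + card (F_r T)"
proof -
  define G where "G = {(v, w) \<in> st_edges T. v \<in> maximal_repeats T}"
  define W where "W k = (SOME w. (VV k, w) \<in> st_edges T \<and> prefix (VV k @ [bb k]) w)" for k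
  define f where "f k = (VV k, W k)" for k
  have Wp: "(VV k, W k) \<in> st_edges T \<and> prefix (VV k @ [bb k]) (W k)" if "k \<in> lz_starts A T" for k
  proof -
    have kn: "k < n" using lz_lt that .
    show ?thesis unfolding W_def
      by (rule someI_ex, rule child[OF fac_cl(2)[OF kn] fac_cl(5)[OF kn]])
  qed
  have img: "f ` lz_starts A T \<subseteq> G"
    using Wp fac_cl(2) lz_lt by (auto simp: f_def G_def)
  have inj: "inj_on f (lz_starts A T)"
  proof (rule inj_onI)
    fix x y assume x: "x \<in> lz_starts A T" and y: "y \<in> lz_starts A T" and fe: "f x = f y"
    have V: "VV x = VV y" and Wq: "W x = W y" using fe by (auto simp: f_def)
    have "bb x = W x ! length (VV x)"
      using Wp[OF x] by (auto simp: prefix_def nth_append)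
    moreover have "bb y = W y ! length (VV y)"
      using Wp[OF y] by (auto simp: prefix_def nth_append)
    ultimately have B: "bb x = bb y" using V Wq by simp
    show "x = y"
    proof (rule ccontr)
      assume "x \<noteq> y"
      then consider "x < y" | "y < x" by linarith
      thus False
      proof cases
        case 1 show False by (rule core[OF x y 1 V B])
      next
        case 2 show False by (rule core[OF y x 2 V[symmetric] B[symmetric]])
      qed
    qed
  qed
  have fin: "finite G" by (rule finite_subset[OF _ edges_fin]) (auto simp: G_def)
  have "card (lz_starts A T) \<le> card G" by (rule card_inj_on_le[OF inj img fin])
  thus ?thesis using EF by (simp add: G_def)
qed

end

theorem theorem2:
  fixes \<sigma> n :: nat and T A :: "nat list"
  assumes "\<sigma> \<ge> 1" and "n \<ge> 2" and "length T = n"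
    and "\<forall>i < n - 1. T ! i \<in> {1..\<sigma>}" and "T ! (n - 1) = 0"
    and "distinct A" and "set A = set T"
  shows "lz_z A T \<le> card (E_r T) + card (F_r T)"
proof -
  interpret lzc T A n
  proof
    show "\<And>i. i < n - 1 \<Longrightarrow> T ! i \<noteq> 0" using assms(4) by fastforce
  qed (use assms in auto)
  show ?thesis using main by (simp add: lz_z_def)
qed

end
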